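(* Let $\eta\in(0,1)$. Let $\mathbf{w}_0$ be such that $\xi_{01}\neq0$, and suppose that for each $t\ge0$ the vector $\mathbf{w}_{t+1}$ approximately minimizes $f_{t+1}$ so accurately that $\epsilon_t:=\frac{f_{t+1}(\mathbf{w}_{t+1})-f_{t+1}^*}{\mathbf{w}_t^\top\widehat{\mathbf{B}}\mathbf{w}_t}\le\min\Big(\sum_{i=2}^d\xi_{ti}^2/\beta_i,\ \xi_{t1}^2/\beta_1\Big)\cdot\frac{(\beta_1-\beta_2)^2}{32}.$ Let $T=\lceil\log_{7/5}(G(\mathbf{r}_0)/\eta)\rceil$. Then $|\sin\theta_t|\le G(\mathbf{r}_t)\le\eta$ for all $t\ge T$.
   Context: Given samples $(\mathbf{x}_i,\mathbf{y}_i)_{i=1}^N$ in $\mathbb{R}^{d_x}\times\mathbb{R}^{d_y}$, $d=d_x+d_y$, let $\widehat{\Sigma}_{xx}=\frac1N\sum\mathbf{x}_i\mathbf{x}_i^\top$, $\widehat{\Sigma}_{yy}=\frac1N\sum\mathbf{y}_i\mathbf{y}_i^\top$ (assumed positive definite), $\widehat{\Sigma}_{xy}=\frac1N\sum\mathbf{x}_i\mathbf{y}_i^\top$, $\widehat{\mathbf{T}}=\widehat{\Sigma}_{xx}^{-1/2}\widehat{\Sigma}_{xy}\widehat{\Sigma}_{yy}^{-1/2}$ with singular values $\widehat\rho_1\ge\widehat\rho_2\ge\cdots$ and gap $\widehat\Delta=\widehat\rho_1-\widehat\rho_2>0$, top unit singular pair $(\widehat{\mathbf{a}}_1,\widehat{\mathbf{b}}_1)$,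 $\widehat{\mathbf{u}}=\widehat{\Sigma}_{xx}^{-1/2}\widehat{\mathbf{a}}_1$, $\widehat{\mathbf{v}}=\widehat{\Sigma}_{yy}^{-1/2}\widehat{\mathbf{b}}_1$. Let $\lambda$ satisfy $\lambda-\widehat\rho_1\in[l\widehat\Delta,u\widehat\Delta]$ with $0<l<u<1$. Define $\widehat{\mathbf{C}}=\begin{bmatrix}\mathbf{0}&\widehat{\mathbf{T}}\\ \widehat{\mathbf{T}}^\top&\mathbf{0}\end{bmatrix}$, $\widehat{\mathbf{M}}_\lambda=(\lambda\mathbf{I}-\widehat{\mathbf{C}})^{-1}$, $\widehat{\mathbf{A}}_\lambda=\begin{bmatrix}\lambda\widehat{\Sigma}_{xx}&-\widehat{\Sigma}_{xy}\\-\widehat{\Sigma}_{xy}^\top&\lambda\widehat{\Sigma}_{yy}\end{bmatrix}$, $\widehat{\mathbf{B}}=\mathrm{diag}(\widehat{\Sigma}_{xx},\widehat{\Sigma}_{yy})$, so that $\widehat{\mathbf{M}}_\lambda=\widehat{\mathbf{B}}^{1/2}\widehat{\mathbf{A}}_\lambda^{-1}\widehat{\mathbf{B}}^{1/2}$. Let $\beta_1\ge\beta_2\ge\cdots\ge\beta_d>0$ be the eigenvalues of $\widehat{\mathbf{M}}_\lambda$ with orthonormal eigenvectors $\mathbf{p}_1,\dots,\mathbf{p}_d$, where $\mathbf{p}_1=\widehat{\mathbf{r}}:=\frac1{\sqrt2}[\widehat{\Sigma}_{xx}^{1/2}\widehat{\mathbf{u}};\widehat{\Sigma}_{yy}^{1/2}\widehat{\mathbf{v}}]$.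 For iterates $\mathbf{w}_t\in\mathbb{R}^d$ set $\mathbf{r}_t=\widehat{\mathbf{B}}^{1/2}\mathbf{w}_t$, $\xi_{ti}=\mathbf{r}_t^\top\mathbf{p}_i/\|\mathbf{r}_t\|$, $\theta_t$ the angle between $\mathbf{r}_t$ and $\widehat{\mathbf{r}}$, and $G(\mathbf{r}_t)=\sqrt{\sum_{i=2}^d\xi_{ti}^2/\beta_i}\big/\sqrt{\xi_{t1}^2/\beta_1}$. The least squares objective is $f_{t+1}(\mathbf{w})=\frac12\mathbf{w}^\top\widehat{\mathbf{A}}_\lambda\mathbf{w}-\mathbf{w}^\top\widehat{\mathbf{B}}\mathbf{w}_t$, with minimizer $\widehat{\mathbf{A}}_\lambda^{-1}\widehat{\mathbf{B}}\mathbf{w}_t$ and minimum value $f_{t+1}^*$. *)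

theory Defs
  imports "HOL-Analysis.Analysis"
begin

definition outer :: "real^'m \<Rightarrow> real^'n \<Rightarrow> real^'n^'m" where
  "outer u v = (\<chi> i j. u$i * v$j)"

definition psd_mat :: "real^'n^'n \<Rightarrow> bool" where
  "psd_mat A \<longleftrightarrow> transpose A = A \<and> (\<forall>v. 0 \<le> v \<bullet> (A *v v))"

definition pd_mat :: "real^'n^'n \<Rightarrow> bool" where
  "pd_mat A \<longleftrightarrow> transpose A = A \<and> (\<forall>v. v \<noteq> 0 \<longrightarrow> 0 < v \<bullet> (A *v v))"

definition msqrt :: "real^'n^'n \<Rightarrow> real^'n^'n" where
  "msqrt A = (THE S. psd_mat S \<and> S ** S = A)"

definition minvsqrt :: "real^'n^'n \<Rightarrow> real^'n^'n" where
  "minvsqrt A = matrix_inv (msqrt A)"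

definition emp_cov :: "nat \<Rightarrow> (nat \<Rightarrow> real^'m) \<Rightarrow> (nat \<Rightarrow> real^'n) \<Rightarrow> real^'n^'m" where
  "emp_cov N x y = (1 / real N) *\<^sub>R (\<Sum>i<N. outer (x i) (y i))"

definition blk :: "real^'x^'x \<Rightarrow> real^'y^'x \<Rightarrow> real^'x^'y \<Rightarrow> real^'y^'y \<Rightarrow> real^('x+'y)^('x+'y)" where
  "blk P Q R S = (\<chi> i j. case i of
      Inl a \<Rightarrow> (case j of Inl c \<Rightarrow> P$a$c | Inr c \<Rightarrow> Q$a$c)
    | Inr a \<Rightarrow> (case j of Inl c \<Rightarrow> R$a$c | Inr c \<Rightarrow> S$a$c))"

definition vcat :: "real^'x \<Rightarrow> real^'y \<Rightarrow> real^('x+'y)" where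
  "vcat u v = (\<chi> i. case i of Inl a \<Rightarrow> u$a | Inr c \<Rightarrow> v$c)"

definition vangle :: "'a::real_inner \<Rightarrow> 'a \<Rightarrow> real" where
  "vangle u v = arccos ((u \<bullet> v) / (norm u * norm v))"

end

theory Submission
  imports Defs
begin


lemma sym_dot:
  fixes A :: "real^'n^'n"
  assumes "transpose A = A"
  shows "x \<bullet> (A *v y) = (A *v x) \<bullet> y"
  by (metis assms dot_lmul_matrix transpose_matrix_vector)

lemma lin_quad_zero:
  fixes a b :: real
  assumes "\<forall>t. a*t + b*t^2 \<le> 0"
  shows "a = 0"
proof (rule ccontr)
  assume a: "a \<noteq> 0"
  define c where "c = 1 / (\<bar>b\<bar> + 1)"
  have c: "c > 0" "\<bar>b*c\<bar> < 1" unfolding c_def by (auto simp: abs_mult field_simps)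
  have "a*(a*c) + b*(a*c)^2 = a^2 * c * (1 + b*c)" by (simp add: power2_eq_square algebra_simps)
  moreover have "a^2 * c * (1 + b*c) > 0" using a c by (auto intro!: mult_pos_pos simp: abs_less_iff)
  ultimately show False using assms[rule_format, of "a*c"] by linarith
qed

lemma cont_q: "continuous_on S (\<lambda>x. x \<bullet> ((A::real^'n^'n) *v x))"
  by (intro continuous_intros linear_continuous_on matrix_vector_mul_bounded_linear)

lemma spectral_sub:
  fixes A :: "real^'n^'n"
  assumes sym: "transpose A = A"
  shows "subspace V \<Longrightarrow> (\<forall>x\<in>V. A *v x \<in> V) \<Longrightarrow> \<exists>E. E \<subseteq> V \<and> pairwise orthogonal E \<and>
     (\<forall>e\<in>E. norm e = 1 \<and> (\<exists>\<mu>. A *v e = \<mu> *\<^sub>R e)) \<and> span E = V"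
proof (induction "dim V" arbitrary: V rule: less_induct)
  case less
  note sV = less.prems(1) and inv = less.prems(2)
  show ?case
  proof (cases "V = {0}")
    case True then show ?thesis by (intro exI[of _ "{}"]) auto
  next
    case False
    then obtain z where z: "z\<in>V" "z\<noteq>0" using subspace_0[OF sV] by blast
    define q where "q = (\<lambda>x. x \<bullet> (A *v x))"
    let ?S = "sphere 0 1 \<inter> V"
    have cpt: "compact ?S" by (intro compact_Int_closed compact_sphere closed_subspace sV)
    have "z /\<^sub>R norm z \<in> ?S" using z subspace_scale[OF sV] by auto
    hence ne: "?S \<noteq> {}" by blast
    obtain x0 where x0: "x0 \<in> ?S" and mx: "\<And>x. x \<in> ?S \<Longrightarrow> q x \<le> q x0"
      using continuous_attains_sup[OF cpt ne cont_q] unfolding q_def by blast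
    define \<mu> where "\<mu> = q x0"
    have x0V: "x0 \<in> V" and nx0: "norm x0 = 1" using x0 by auto
    have x0x0: "x0 \<bullet> x0 = 1" using nx0 by (simp add: dot_square_norm)
    have homog: "q y \<le> \<mu> * (y \<bullet> y)" if "y \<in> V" for y
    proof (cases "y = 0")
      case True then show ?thesis by (simp add: q_def)
    next
      case False
      have "y /\<^sub>R norm y \<in> ?S" using that False subspace_scale[OF sV] by auto
      hence "q (y /\<^sub>R norm y) \<le> \<mu>" using mx \<mu>_def by auto
      moreover have "q (y /\<^sub>R norm y) = q y / (norm y)^2"
        by (simp add: q_def matrix_vector_mult_scaleR power2_eq_square field_simps)
      moreover have "y \<bullet> y = (norm y)^2" by (simp add: dot_square_norm)
      ultimately have "q y / (norm y)^2 \<le> \<mu>" "y \<bullet> y = (norm y)^2" by auto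
      moreover have "(norm y)^2 > 0" using False by simp
      ultimately show ?thesis by (simp add: divide_le_eq)
    qed
    have crit: "y \<bullet> (A *v x0) = \<mu> * (x0 \<bullet> y)" if "y \<in> V" for y
    proof -
      have "\<forall>t. (2*(y \<bullet> (A *v x0)) - 2*\<mu>*(x0 \<bullet> y))*t + (q y - \<mu>*(y \<bullet> y))*t^2 \<le> 0"
      proof
        fix t :: real
        have "x0 + t *\<^sub>R y \<in> V" using x0V that sV by (simp add: subspace_add subspace_scale)
        hence h: "q (x0 + t *\<^sub>R y) \<le> \<mu> * ((x0 + t *\<^sub>R y) \<bullet> (x0 + t *\<^sub>R y))" by (rule homog)
        have s: "x0 \<bullet> (A *v y) = y \<bullet> (A *v x0)" using sym_dot[OF sym] by (metis inner_commute)
        have "q (x0 + t *\<^sub>R y) = \<mu> + 2*t*(y \<bullet> (A *v x0)) + t^2 * q y"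
          unfolding q_def \<mu>_def using s
          by (simp add: matrix_vector_right_distrib matrix_vector_mult_scaleR inner_add_left inner_add_right
              power2_eq_square algebra_simps inner_commute)
        moreover have "(x0 + t *\<^sub>R y) \<bullet> (x0 + t *\<^sub>R y) = 1 + 2*t*(x0 \<bullet> y) + t^2*(y \<bullet> y)"
          using x0x0 by (simp add: inner_add_left inner_add_right power2_eq_square algebra_simps inner_commute)
        ultimately show "(2*(y \<bullet> (A *v x0)) - 2*\<mu>*(x0 \<bullet> y))*t + (q y - \<mu>*(y \<bullet> y))*t^2 \<le> 0"
          using h by (simp add: algebra_simps)
      qed
      from lin_quad_zero[OF this] show ?thesis by simp
    qed
    have Ax0V: "A *v x0 \<in> V" using inv x0V by blast
    let ?y = "A *v x0 - \<mu> *\<^sub>R x0"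
    have yV: "?y \<in> V" using Ax0V x0V sV by (simp add: subspace_diff subspace_scale)
    have "?y \<bullet> ?y = 0" using crit[OF yV] x0x0
      by (simp add: inner_diff_left inner_diff_right crit[OF Ax0V] crit[OF x0V] algebra_simps inner_commute)
    hence eig: "A *v x0 = \<mu> *\<^sub>R x0" by simp
    define V' where "V' = {x\<in>V. x0 \<bullet> x = 0}"
    have sV': "subspace V'" unfolding V'_def subspace_def using sV
      by (auto simp: subspace_0 subspace_add subspace_scale inner_add_right)
    have inv': "\<forall>x\<in>V'. A *v x \<in> V'"
    proof
      fix x assume "x \<in> V'"
      hence xV: "x \<in> V" and o: "x0 \<bullet> x = 0" unfolding V'_def by auto
      have "x0 \<bullet> (A *v x) = (A *v x0) \<bullet> x" by (rule sym_dot[OF sym])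
      also have "\<dots> = 0" using eig o by simp
      finally show "A *v x \<in> V'" using inv xV unfolding V'_def by auto
    qed
    have "span V' \<subset> span V"
    proof -
      have e1: "span V' = V'" "span V = V" using sV sV' by (auto simp: span_eq_iff)
      have "V' \<subset> V"
      proof -
        have "x0 \<notin> V'" using x0x0 unfolding V'_def by auto
        thus ?thesis using x0V unfolding V'_def by blast
      qed
      thus ?thesis unfolding e1 .
    qed
    hence dlt: "dim V' < dim V" by (rule dim_psubset)
    obtain E' where E': "E' \<subseteq> V'" "pairwise orthogonal E'"
      "\<forall>e\<in>E'. norm e = 1 \<and> (\<exists>\<mu>. A *v e = \<mu> *\<^sub>R e)" "span E' = V'"
      using less.hyps[OF dlt sV' inv'] by blast
    show ?thesis
    proof (intro exI[of _ "insert x0 E'"] conjI)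
      show "insert x0 E' \<subseteq> V" using E'(1) x0V unfolding V'_def by auto
      show "pairwise orthogonal (insert x0 E')"
        using E'(1,2) unfolding pairwise_insert V'_def orthogonal_def by (auto simp: inner_commute)
      show "\<forall>e\<in>insert x0 E'. norm e = 1 \<and> (\<exists>\<mu>. A *v e = \<mu> *\<^sub>R e)" using E'(3) nx0 eig by auto
      show "span (insert x0 E') = V"
      proof
        show "span (insert x0 E') \<subseteq> V"
          using E'(1) x0V sV unfolding V'_def by (intro span_minimal) auto
        show "V \<subseteq> span (insert x0 E')"
        proof
          fix x assume xV: "x \<in> V"
          have "x - (x0 \<bullet> x) *\<^sub>R x0 \<in> V'" unfolding V'_def using xV x0V sV x0x0
            by (simp add: subspace_diff subspace_scale inner_diff_right)
          thus "x \<in> span (insert x0 E')" using E'(4) span_breakdown_eq by blast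
        qed
      qed
    qed
  qed
qed

lemma on_expand:
  fixes q :: "'i \<Rightarrow> 'a::euclidean_space"
  assumes fin: "finite I" and on: "\<forall>i\<in>I. \<forall>j\<in>I. q i \<bullet> q j = (if i = j then 1 else 0)"
    and sp: "span (q ` I) = UNIV"
  shows "x = (\<Sum>i\<in>I. (x \<bullet> q i) *\<^sub>R q i)"
proof -
  define d where "d = x - (\<Sum>i\<in>I. (x \<bullet> q i) *\<^sub>R q i)"
  have o: "orthogonal d y" if yI: "y \<in> q ` I" for y
  proof -
    obtain j where j: "j \<in> I" "y = q j" using yI by blast
    have "(\<Sum>i\<in>I. (x \<bullet> q i) * (q i \<bullet> q j)) = (\<Sum>i\<in>I. if i = j then x \<bullet> q j else 0)"
      using on j(1) by (intro sum.cong) auto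
    also have "\<dots> = x \<bullet> q j" using fin j(1) by simp
    finally show ?thesis unfolding orthogonal_def d_def j(2)
      by (simp add: inner_diff_left inner_sum_left)
  qed
  have "d \<in> span (q ` I)" by (simp add: sp)
  hence "orthogonal d d" using o orthogonal_to_span by blast
  hence "d = 0" by (simp add: orthogonal_def)
  thus ?thesis unfolding d_def by simp
qed

lemma on_parseval:
  fixes q :: "'i \<Rightarrow> 'a::euclidean_space"
  assumes fin: "finite I" and on: "\<forall>i\<in>I. \<forall>j\<in>I. q i \<bullet> q j = (if i = j then 1 else 0)"
    and sp: "span (q ` I) = UNIV"
  shows "x \<bullet> y = (\<Sum>i\<in>I. (x \<bullet> q i) * (y \<bullet> q i))"
proof -
  have "x \<bullet> y = (\<Sum>i\<in>I. (x \<bullet> q i) *\<^sub>R q i) \<bullet> y" using on_expand[OF assms] by metis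
  also have "\<dots> = (\<Sum>i\<in>I. (x \<bullet> q i) * (q i \<bullet> y))" by (simp add: inner_sum_left)
  finally show ?thesis by (simp add: inner_commute)
qed

lemma onb_span:
  fixes q :: "nat \<Rightarrow> real^'n"
  assumes on: "\<forall>i\<in>{1..d}. \<forall>j\<in>{1..d}. q i \<bullet> q j = (if i = j then 1 else 0)"
    and d: "d = CARD('n)"
  shows "span (q ` {1..d}) = UNIV"
proof -
  have inj: "inj_on q {1..d}"
  proof
    fix i j assume "i \<in> {1..d}" "j \<in> {1..d}" "q i = q j"
    thus "i = j" using on by (metis one_neq_zero)
  qed
  have po: "pairwise orthogonal (q ` {1..d})"
    unfolding pairwise_def orthogonal_def using on by auto
  have nz: "0 \<notin> q ` {1..d}" using on by force
  have ind: "independent (q ` {1..d})" by (rule pairwise_orthogonal_independent[OF po nz])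
  have card: "card (q ` {1..d}) = dim (UNIV :: (real^'n) set)"
    using card_image[OF inj] d by (simp add: dim_UNIV)
  have "UNIV \<subseteq> span (q ` {1..d})"
    using card_eq_dim[of "q ` {1..d}" UNIV] card ind by simp
  thus ?thesis by auto
qed

lemma outer_sum_mult:
  fixes E :: "(real^'n) set"
  shows "(\<chi> i j. \<Sum>e\<in>E. c e * e$i * e$j) *v x = (\<Sum>e\<in>E. (c e * (e \<bullet> x)) *\<^sub>R e)"
  apply (simp add: vec_eq_iff matrix_vector_mult_def sum_component inner_vec_def sum_distrib_left
      sum_distrib_right mult.assoc mult.left_commute)
  apply (rule allI, subst sum.swap, simp add: mult_ac)
  done


lemma spectral_UNIV:
  fixes A :: "real^'n^'n"
  assumes "transpose A = A"
  obtains E where "finite E" "\<forall>i\<in>E. \<forall>j\<in>E. i \<bullet> j = (if i = j then 1 else 0)"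
    "span E = UNIV" "\<forall>e\<in>E. A *v e = (e \<bullet> (A *v e)) *\<^sub>R e"
proof -
  obtain E where E: "pairwise orthogonal E" "\<forall>e\<in>E. norm e = 1 \<and> (\<exists>\<mu>. A *v e = \<mu> *\<^sub>R e)" "span E = UNIV"
    using spectral_sub[OF assms subspace_UNIV] by auto
  have "0 \<notin> E" using E(2) by force
  hence "independent E" using pairwise_orthogonal_independent E(1) by blast
  hence fin: "finite E" by (rule independent_imp_finite)
  have on: "\<forall>i\<in>E. \<forall>j\<in>E. i \<bullet> j = (if i = j then 1 else 0)"
    using E(1,2) unfolding pairwise_def orthogonal_def by (auto simp: dot_square_norm)
  have "\<forall>e\<in>E. A *v e = (e \<bullet> (A *v e)) *\<^sub>R e"
  proof
    fix e assume "e \<in> E"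
    moreover from this obtain \<mu> where "A *v e = \<mu> *\<^sub>R e" using E(2) by blast
    ultimately have "A *v e = \<mu> *\<^sub>R e" "e \<bullet> e = 1" using on by auto
    thus "A *v e = (e \<bullet> (A *v e)) *\<^sub>R e" by simp
  qed
  thus ?thesis using that fin on E(3) by blast
qed

lemma psd_sqrt_exists:
  fixes A :: "real^'n^'n"
  assumes "pd_mat A"
  shows "\<exists>S. psd_mat S \<and> S ** S = A"
proof -
  have sym: "transpose A = A" using assms unfolding pd_mat_def by auto
  obtain E where fin: "finite E" and on: "\<forall>i\<in>E. \<forall>j\<in>E. i \<bullet> j = (if i = j then 1 else 0)"
    and sp: "span E = UNIV" and eig: "\<forall>e\<in>E. A *v e = (e \<bullet> (A *v e)) *\<^sub>R e"
    using spectral_UNIV[OF sym] by blast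
  define mu where "mu e = e \<bullet> (A *v e)" for e
  have mupos: "mu e > 0" if "e \<in> E" for e
  proof -
    have "e \<noteq> 0" using on that by force
    thus ?thesis using assms unfolding pd_mat_def mu_def by auto
  qed
  have spE: "span (id ` E) = UNIV" using sp by simp
  have exp: "x = (\<Sum>e\<in>E. (x \<bullet> e) *\<^sub>R e)" for x
    using on_expand[of E id x] fin on spE by simp
  define S where "S = (\<chi> i j. \<Sum>e\<in>E. sqrt (mu e) * e$i * e$j)"
  have Sx: "S *v x = (\<Sum>e\<in>E. (sqrt (mu e) * (e \<bullet> x)) *\<^sub>R e)" for x
    unfolding S_def by (rule outer_sum_mult)
  have Sxe: "(S *v x) \<bullet> e = sqrt (mu e) * (e \<bullet> x)" if "e \<in> E" for x e
  proof -
    have "(S *v x) \<bullet> e = (\<Sum>e'\<in>E. sqrt (mu e') * (e' \<bullet> x) * (e' \<bullet> e))"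
      by (simp add: Sx inner_sum_left)
    also have "\<dots> = (\<Sum>e'\<in>E. if e' = e then sqrt (mu e) * (e \<bullet> x) else 0)"
      using on that by (intro sum.cong) auto
    also have "\<dots> = sqrt (mu e) * (e \<bullet> x)" using fin that by simp
    finally show ?thesis .
  qed
  have Ax: "A *v x = (\<Sum>e\<in>E. (mu e * (e \<bullet> x)) *\<^sub>R e)" for x
  proof -
    have "A *v x = (\<Sum>e\<in>E. (x \<bullet> e) *\<^sub>R (A *v e))"
      by (subst exp[of x]) (simp add: vec.sum matrix_vector_mult_scaleR)
    also have "\<dots> = (\<Sum>e\<in>E. (mu e * (e \<bullet> x)) *\<^sub>R e)"
    proof (intro sum.cong refl)
      fix e assume "e \<in> E"
      hence "A *v e = mu e *\<^sub>R e" using eig mu_def by auto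
      thus "(x \<bullet> e) *\<^sub>R (A *v e) = (mu e * (e \<bullet> x)) *\<^sub>R e" by (simp add: inner_commute)
    qed
    finally show ?thesis .
  qed
  have SS: "S ** S = A"
  proof (rule iffD2[OF matrix_eq], rule allI)
    fix x
    have "(S ** S) *v x = S *v (S *v x)" by (simp add: matrix_vector_mul_assoc)
    also have "\<dots> = (\<Sum>e\<in>E. (sqrt (mu e) * (e \<bullet> (S *v x))) *\<^sub>R e)" by (rule Sx)
    also have "\<dots> = (\<Sum>e\<in>E. (mu e * (e \<bullet> x)) *\<^sub>R e)"
    proof (intro sum.cong refl)
      fix e assume e: "e \<in> E"
      have "sqrt (mu e) * (e \<bullet> (S *v x)) = sqrt (mu e) * sqrt (mu e) * (e \<bullet> x)"
        using Sxe[OF e, of x] by (simp add: inner_commute)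
      also have "\<dots> = mu e * (e \<bullet> x)" using mupos[OF e] by simp
      finally show "(sqrt (mu e) * (e \<bullet> (S *v x))) *\<^sub>R e = (mu e * (e \<bullet> x)) *\<^sub>R e" by simp
    qed
    also have "\<dots> = A *v x" by (rule Ax[symmetric])
    finally show "(S ** S) *v x = A *v x" .
  qed
  have tS: "transpose S = S" unfolding S_def transpose_def by (simp add: vec_eq_iff mult.commute mult.left_commute)
  have "0 \<le> v \<bullet> (S *v v)" for v
  proof -
    have "v \<bullet> (S *v v) = (\<Sum>e\<in>E. sqrt (mu e) * (e \<bullet> v)^2)"
      by (simp add: Sx inner_sum_right power2_eq_square inner_commute mult.assoc)
    also have "\<dots> \<ge> 0" using mupos by (intro sum_nonneg) (simp add: less_imp_le)
    finally show ?thesis .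
  qed
  with tS SS show ?thesis unfolding psd_mat_def by blast
qed

lemma psd_sqrt_unique:
  fixes A S R :: "real^'n^'n"
  assumes "pd_mat A" "psd_mat S" "S ** S = A" "psd_mat R" "R ** R = A"
  shows "S = R"
proof -
  have sym: "transpose A = A" using assms unfolding pd_mat_def by auto
  obtain E where fin: "finite E" and on: "\<forall>i\<in>E. \<forall>j\<in>E. i \<bullet> j = (if i = j then 1 else 0)"
    and sp: "span E = UNIV" and eig: "\<forall>e\<in>E. A *v e = (e \<bullet> (A *v e)) *\<^sub>R e"
    using spectral_UNIV[OF sym] by blast
  have spE: "span (id ` E) = UNIV" using sp by simp
  have exp: "x = (\<Sum>e\<in>E. (x \<bullet> e) *\<^sub>R e)" for x
    using on_expand[of E id x] fin on spE by simp
  have key: "T *v e = sqrt (e \<bullet> (A *v e)) *\<^sub>R e" if T: "psd_mat T" "T ** T = A" and e: "e \<in> E" for T e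
  proof -
    define mu where "mu = e \<bullet> (A *v e)"
    have "e \<noteq> 0" using on e by force
    hence mpos: "mu > 0" using assms(1) unfolding pd_mat_def mu_def by auto
    define s where "s = sqrt mu"
    have spos: "s > 0" using mpos s_def by simp
    define y where "y = T *v e - s *\<^sub>R e"
    have "T *v y + s *\<^sub>R y = T *v (T *v e) - mu *\<^sub>R e"
      unfolding y_def s_def using mpos
      by (simp add: matrix_vector_mult_diff_distrib matrix_vector_mult_scaleR algebra_simps)
    also have "\<dots> = 0" using T(2) eig e by (simp add: matrix_vector_mul_assoc mu_def)
    finally have "T *v y + s *\<^sub>R y = 0" .
    hence "y \<bullet> (T *v y) + s * (y \<bullet> y) = 0" by (metis inner_add_right inner_scaleR_right inner_zero_right)
    moreover have "y \<bullet> (T *v y) \<ge> 0" using T(1) unfolding psd_mat_def by auto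
    moreover have "y \<bullet> y \<ge> 0" by simp
    ultimately have "s * (y \<bullet> y) = 0" using spos by (smt (verit) mult_nonneg_nonneg)
    hence "y = 0" using spos by simp
    thus ?thesis unfolding y_def s_def mu_def by simp
  qed
  show ?thesis
  proof (rule iffD2[OF matrix_eq], rule allI)
    fix x
    have "S *v x = (\<Sum>e\<in>E. (x \<bullet> e) *\<^sub>R (S *v e))"
      by (subst exp[of x]) (simp add: vec.sum matrix_vector_mult_scaleR)
    also have "\<dots> = (\<Sum>e\<in>E. (x \<bullet> e) *\<^sub>R (R *v e))"
      using key[OF assms(2,3)] key[OF assms(4,5)] by (intro sum.cong) auto
    also have "\<dots> = R *v x"
      by (subst (2) exp[of x]) (simp add: vec.sum matrix_vector_mult_scaleR)
    finally show "S *v x = R *v x" .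
  qed
qed

lemma msqrt_props:
  fixes A :: "real^'n^'n"
  assumes "pd_mat A"
  shows "psd_mat (msqrt A)" "msqrt A ** msqrt A = A" "transpose (msqrt A) = msqrt A"
    "invertible (msqrt A)"
proof -
  have ex1: "\<exists>!S. psd_mat S \<and> S ** S = A"
    using psd_sqrt_exists[OF assms] psd_sqrt_unique[OF assms] by blast
  have P: "psd_mat (msqrt A) \<and> msqrt A ** msqrt A = A"
    unfolding msqrt_def by (rule theI'[OF ex1])
  thus "psd_mat (msqrt A)" "msqrt A ** msqrt A = A" by auto
  thus "transpose (msqrt A) = msqrt A" unfolding psd_mat_def by auto
  have "\<forall>x. msqrt A *v x = 0 \<longrightarrow> x = 0"
  proof (intro allI impI)
    fix x assume "msqrt A *v x = 0"
    hence "A *v x = 0" using P by (metis matrix_vector_mul_assoc matrix_vector_mult_0_right)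
    thus "x = 0" using assms unfolding pd_mat_def by force
  qed
  thus "invertible (msqrt A)"
    using matrix_left_invertible_ker invertible_left_inverse by blast
qed

lemma msqrt_unique:
  fixes A S :: "real^'n^'n"
  assumes "pd_mat A" "psd_mat S" "S ** S = A"
  shows "msqrt A = S"
  using psd_sqrt_unique[OF assms(1) _ _ assms(2,3)] msqrt_props[OF assms(1)] by blast

lemma minv_props:
  fixes A :: "real^'n^'n"
  assumes "invertible A"
  shows "A ** matrix_inv A = mat 1" "matrix_inv A ** A = mat 1"
proof -
  have "\<exists>A'. A ** A' = mat 1 \<and> A' ** A = mat 1" using assms unfolding invertible_def by blast
  hence "A ** matrix_inv A = mat 1 \<and> matrix_inv A ** A = mat 1"
    unfolding matrix_inv_def by (rule someI_ex)
  thus "A ** matrix_inv A = mat 1" "matrix_inv A ** A = mat 1" by auto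
qed




lemma iter_step:
  fixes \<beta> c c' e :: "nat \<Rightarrow> real" and d :: nat
  assumes d2: "2 \<le> d" and bpos: "\<forall>i\<in>{1..d}. \<beta> i > 0" and ble: "\<forall>i\<in>{2..d}. \<beta> i \<le> \<beta> 2"
    and b12: "\<beta> 2 \<le> \<beta> 1 / 2"
    and rec: "\<forall>i\<in>{1..d}. c' i = \<beta> i * c i + e i"
    and c1: "c 1 \<noteq> 0"
    and err: "(\<Sum>i\<in>{1..d}. (e i)^2/\<beta> i) \<le> min (\<Sum>i\<in>{2..d}. (c i)^2/\<beta> i) ((c 1)^2/\<beta> 1) * (\<beta> 1 - \<beta> 2)^2/16"
  shows "c' 1 \<noteq> 0 \<and> sqrt (\<Sum>i\<in>{2..d}. (c' i)^2/\<beta> i) / sqrt ((c' 1)^2/\<beta> 1)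
           \<le> 5/7 * (sqrt (\<Sum>i\<in>{2..d}. (c i)^2/\<beta> i) / sqrt ((c 1)^2/\<beta> 1))"
proof -
  define \<delta> where "\<delta> = \<beta> 1 - \<beta> 2"
  define N where "N = (\<Sum>i\<in>{2..d}. (c i)^2/\<beta> i)"
  define N' where "N' = (\<Sum>i\<in>{2..d}. (c' i)^2/\<beta> i)"
  define D where "D = (c 1)^2/\<beta> 1"
  define D' where "D' = (c' 1)^2/\<beta> 1"
  define E where "E = sqrt (\<Sum>i\<in>{1..d}. (e i)^2/\<beta> i)"
  have b1: "\<beta> 1 > 0" using bpos d2 by auto
  have b2: "\<beta> 2 > 0" using bpos d2 by auto
  have dpos: "\<delta> \<ge> 0" "\<delta> \<le> \<beta> 1" using b12 b1 b2 unfolding \<delta>_def by auto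
  have N0: "N \<ge> 0" unfolding N_def using bpos by (intro sum_nonneg) (auto simp: less_imp_le)
  have Es0: "0 \<le> (\<Sum>i\<in>{1..d}. (e i)^2/\<beta> i)"
  proof (rule sum_nonneg)
    fix i assume "i \<in> {1..d}" hence "\<beta> i > 0" using bpos by auto
    thus "0 \<le> (e i)^2/\<beta> i" by simp
  qed
  have E2: "E^2 \<le> min N D * \<delta>^2/16" unfolding E_def real_sqrt_pow2[OF Es0] N_def D_def \<delta>_def
    by (rule err)
  have sq: "sqrt (x * \<delta>^2/16) = sqrt x * (\<delta>/4)" if "x \<ge> 0" for x
  proof -
    have h: "x * \<delta>^2/16 = x * (\<delta>/4)^2" by (simp add: power2_eq_square)
    have "sqrt (x * \<delta>^2/16) = sqrt x * sqrt ((\<delta>/4)^2)" by (simp only: h real_sqrt_mult)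
    also have "sqrt ((\<delta>/4)^2) = \<delta>/4" using dpos by simp
    finally show ?thesis .
  qed
  have E0: "E \<ge> 0" unfolding E_def using Es0 by simp
  have EN: "E \<le> sqrt N * (\<delta>/4)"
  proof -
    have "E^2 \<le> N * \<delta>^2/16" using E2 by (smt (verit) divide_right_mono min.cobounded1 mult_right_mono zero_le_power2)
    hence "sqrt (E^2) \<le> sqrt (N * \<delta>^2/16)" by (rule real_sqrt_le_mono)
    thus ?thesis using E0 sq N0 by simp
  qed
  have D0: "D \<ge> 0" unfolding D_def using b1 by simp
  have ED: "E \<le> sqrt D * (\<delta>/4)"
  proof -
    have "E^2 \<le> D * \<delta>^2/16" using E2 by (smt (verit) divide_right_mono min.cobounded2 mult_right_mono zero_le_power2)
    hence "sqrt (E^2) \<le> sqrt (D * \<delta>^2/16)" by (rule real_sqrt_le_mono)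
    thus ?thesis using E0 sq D0 by simp
  qed
  have sb1: "sqrt (\<beta> 1) > 0" using b1 by simp
  have sqD: "sqrt D = \<bar>c 1\<bar> / sqrt (\<beta> 1)" unfolding D_def by (simp add: real_sqrt_divide)
  have sqD': "sqrt D' = \<bar>c' 1\<bar> / sqrt (\<beta> 1)" unfolding D'_def by (simp add: real_sqrt_divide)
  have e1: "\<bar>e 1\<bar> / sqrt (\<beta> 1) \<le> E"
  proof -
    have "(e 1)^2/\<beta> 1 \<le> (\<Sum>i\<in>{1..d}. (e i)^2/\<beta> i)"
      using d2 bpos by (intro member_le_sum) (auto simp: less_imp_le)
    hence "sqrt ((e 1)^2/\<beta> 1) \<le> E" unfolding E_def by (rule real_sqrt_le_mono)
    thus ?thesis by (simp add: real_sqrt_divide)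
  qed
  have c'1: "c' 1 = \<beta> 1 * c 1 + e 1" using rec d2 by auto
  have "\<bar>c' 1\<bar> \<ge> \<beta> 1 * \<bar>c 1\<bar> - \<bar>e 1\<bar>" using c'1 b1 by (simp add: abs_mult)
  hence "\<bar>c' 1\<bar> / sqrt (\<beta> 1) \<ge> (\<beta> 1 * \<bar>c 1\<bar> - \<bar>e 1\<bar>) / sqrt (\<beta> 1)"
    using sb1 by (simp add: divide_right_mono)
  also have "(\<beta> 1 * \<bar>c 1\<bar> - \<bar>e 1\<bar>) / sqrt (\<beta> 1) = \<beta> 1 * sqrt D - \<bar>e 1\<bar> / sqrt (\<beta> 1)"
    using sqD by (simp add: diff_divide_distrib)
  finally have "sqrt D' \<ge> \<beta> 1 * sqrt D - \<bar>e 1\<bar> / sqrt (\<beta> 1)" using sqD' by simp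
  hence Dlow: "sqrt D' \<ge> (\<beta> 1 - \<delta>/4) * sqrt D" using e1 ED by (simp add: algebra_simps)
  have sDpos: "sqrt D > 0" using sqD c1 sb1 by simp
  have fpos: "\<beta> 1 - \<delta>/4 > 0" using dpos b1 by simp
  have sD'pos: "sqrt D' > 0" using Dlow sDpos fpos by (smt (verit) mult_pos_pos)
  hence c'1nz: "c' 1 \<noteq> 0" using sqD' by auto
  define W where "W = {2..d::nat}"
  have Wsub: "W \<subseteq> {1..d}" unfolding W_def by auto
  have bW: "\<forall>i\<in>W. \<beta> i > 0" using bpos Wsub by auto
  have "sqrt N' = L2_set (\<lambda>i. c' i / sqrt (\<beta> i)) W"
    unfolding N'_def L2_set_def W_def
    using bW unfolding W_def by (intro arg_cong[where f=sqrt] sum.cong refl) (simp add: power_divide less_imp_le)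
  also have "\<dots> = L2_set (\<lambda>i. sqrt (\<beta> i) * c i + e i / sqrt (\<beta> i)) W"
  proof (rule L2_set_cong[OF refl])
    fix i assume i: "i \<in> W"
    hence "\<beta> i > 0" "c' i = \<beta> i * c i + e i" using bW rec Wsub by auto
    moreover have "\<beta> i * c i / sqrt (\<beta> i) = (\<beta> i / sqrt (\<beta> i)) * c i" by simp
    ultimately show "c' i / sqrt (\<beta> i) = sqrt (\<beta> i) * c i + e i / sqrt (\<beta> i)"
      by (simp add: add_divide_distrib real_div_sqrt less_imp_le)
  qed
  also have "\<dots> \<le> L2_set (\<lambda>i. sqrt (\<beta> i) * c i) W + L2_set (\<lambda>i. e i / sqrt (\<beta> i)) W"
    by (rule L2_set_triangle_ineq)
  also have "L2_set (\<lambda>i. sqrt (\<beta> i) * c i) W \<le> \<beta> 2 * sqrt N"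
  proof -
    have "(\<Sum>i\<in>W. (sqrt (\<beta> i) * c i)^2) \<le> (\<Sum>i\<in>W. (\<beta> 2)^2 * ((c i)^2/\<beta> i))"
    proof (rule sum_mono)
      fix i assume i: "i \<in> W"
      hence bi: "\<beta> i > 0" "\<beta> i \<le> \<beta> 2" using bW ble W_def by auto
      have "(sqrt (\<beta> i) * c i)^2 = \<beta> i * (c i)^2" using bi by (simp add: power_mult_distrib)
      also have "\<dots> = (\<beta> i)^2 * ((c i)^2/\<beta> i)" using bi by (simp add: power2_eq_square)
      also have "\<dots> \<le> (\<beta> 2)^2 * ((c i)^2/\<beta> i)"
        using bi by (intro mult_right_mono power_mono) auto
      finally show "(sqrt (\<beta> i) * c i)^2 \<le> (\<beta> 2)^2 * ((c i)^2/\<beta> i)" .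
    qed
    also have "\<dots> = (\<beta> 2)^2 * N" unfolding N_def W_def by (simp add: sum_distrib_left)
    finally have "sqrt (\<Sum>i\<in>W. (sqrt (\<beta> i) * c i)^2) \<le> sqrt ((\<beta> 2)^2 * N)" by (rule real_sqrt_le_mono)
    thus ?thesis using b2 N0 by (simp add: L2_set_def real_sqrt_mult)
  qed
  also have "L2_set (\<lambda>i. e i / sqrt (\<beta> i)) W \<le> E"
  proof -
    have "(\<Sum>i\<in>W. (e i / sqrt (\<beta> i))^2) = (\<Sum>i\<in>W. (e i)^2/\<beta> i)"
      using bW by (intro sum.cong refl) (simp add: power_divide less_imp_le)
    also have "\<dots> \<le> (\<Sum>i\<in>{1..d}. (e i)^2/\<beta> i)"
      using Wsub bpos by (intro sum_mono2) (auto simp: less_imp_le)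
    finally show ?thesis unfolding L2_set_def E_def by (rule real_sqrt_le_mono)
  qed
  finally have Nup: "sqrt N' \<le> (\<beta> 2 + \<delta>/4) * sqrt N" using EN by (simp add: algebra_simps)
  have "sqrt N' / sqrt D' \<le> ((\<beta> 2 + \<delta>/4) * sqrt N) / ((\<beta> 1 - \<delta>/4) * sqrt D)"
    using Nup Dlow sD'pos fpos sDpos N0 b2 dpos by (intro frac_le) auto
  also have "\<dots> = ((\<beta> 2 + \<delta>/4) / (\<beta> 1 - \<delta>/4)) * (sqrt N / sqrt D)" by simp
  also have "\<dots> \<le> 5/7 * (sqrt N / sqrt D)"
  proof (rule mult_right_mono)
    show "(\<beta> 2 + \<delta>/4) / (\<beta> 1 - \<delta>/4) \<le> 5/7"
      unfolding pos_divide_le_eq[OF fpos] using b12 unfolding \<delta>_def by (simp add: field_simps)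
    show "0 \<le> sqrt N / sqrt D" using N0 D0 by simp
  qed
  finally show ?thesis using c'1nz unfolding N'_def D'_def N_def D_def by simp
qed




definition vx :: "real^('x::finite+'y::finite) \<Rightarrow> real^'x" where "vx v = (\<chi> a. v$Inl a)"
definition vy :: "real^('x::finite+'y::finite) \<Rightarrow> real^'y" where "vy v = (\<chi> a. v$Inr a)"

lemma vx_vcat[simp]: "vx (vcat g h) = g" by (simp add: vx_def vcat_def vec_eq_iff)
lemma vy_vcat[simp]: "vy (vcat g h) = h" by (simp add: vy_def vcat_def vec_eq_iff)
lemma vcat_split: "vcat (vx v) (vy v) = v"
  by (simp add: vx_def vy_def vcat_def vec_eq_iff split: sum.split)
lemma vxy_eq: "v = w \<longleftrightarrow> vx v = vx w \<and> vy v = vy w"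
  by (metis vcat_split)
lemma vx_simps[simp]: "vx (v + w) = vx v + vx w" "vx (v - w) = vx v - vx w" "vx (c *\<^sub>R v) = c *\<^sub>R vx v"
  "vx 0 = 0" "vx (- v) = - vx v"
  by (simp_all add: vx_def vec_eq_iff)
lemma vy_simps[simp]: "vy (v + w) = vy v + vy w" "vy (v - w) = vy v - vy w" "vy (c *\<^sub>R v) = c *\<^sub>R vy v"
  "vy 0 = 0" "vy (- v) = - vy v"
  by (simp_all add: vy_def vec_eq_iff)

lemma sum_UNIV_plus: "(\<Sum>j\<in>(UNIV::('a::finite+'b::finite) set). f j) = (\<Sum>a\<in>UNIV. f (Inl a)) + (\<Sum>b\<in>UNIV. f (Inr b))"
proof -
  have "(\<Sum>j\<in>(UNIV::('a+'b) set). f j) = (\<Sum>j\<in>(UNIV::'a set) <+> (UNIV::'b set). f j)"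
    by (simp only: UNIV_Plus_UNIV)
  also have "\<dots> = (\<Sum>a\<in>UNIV. f (Inl a)) + (\<Sum>b\<in>UNIV. f (Inr b))" by (subst sum.Plus) (simp_all add: o_def)
  finally show ?thesis .
qed

lemma inner_split: fixes v w :: "real^('x::finite+'y::finite)" shows "v \<bullet> w = vx v \<bullet> vx w + vy v \<bullet> vy w"
proof -
  show ?thesis by (simp add: inner_vec_def sum_UNIV_plus vx_def vy_def)
qed

lemma blk_mult: fixes v :: "real^('x::finite+'y::finite)" shows "blk P Q R S *v v = vcat (P *v vx v + Q *v vy v) (R *v vx v + S *v vy v)"
proof -
  have "(blk P Q R S *v v)$i = (vcat (P *v vx v + Q *v vy v) (R *v vx v + S *v vy v))$i" for i
  proof -
    show ?thesis
      by (cases i) (simp_all add: sum_UNIV_plus blk_def vcat_def matrix_vector_mult_def vx_def vy_def)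
  qed
  thus ?thesis by (simp add: vec_eq_iff)
qed

lemma vx_blk[simp]: "vx (blk P Q R S *v v) = P *v vx v + Q *v vy v" by (simp add: blk_mult)
lemma vy_blk[simp]: "vy (blk P Q R S *v v) = R *v vx v + S *v vy v" by (simp add: blk_mult)

lemma transpose_blk: "transpose (blk P Q R S) = blk (transpose P) (transpose R) (transpose Q) (transpose S)"
  by (simp add: vec_eq_iff transpose_def blk_def split: sum.split)

lemma vx_mat1[simp]: "vx (mat 1 *v v) = vx v" and vy_mat1[simp]: "vy (mat 1 *v v) = vy v" by simp_all




lemma outer_sum_mv:
  fixes a :: "'k \<Rightarrow> real^'x" and b :: "'k \<Rightarrow> real^'y"
  shows "(\<Sum>k\<in>K. c k *\<^sub>R outer (a k) (b k)) *v h = (\<Sum>k\<in>K. (c k * (b k \<bullet> h)) *\<^sub>R a k)"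
  apply (simp add: vec_eq_iff matrix_vector_mult_def sum_component outer_def inner_vec_def
      sum_distrib_left sum_distrib_right mult.assoc mult.left_commute)
  apply (rule allI, subst sum.swap, simp add: mult_ac)
  done

lemma outer_sum_tmv:
  fixes a :: "'k \<Rightarrow> real^'x" and b :: "'k \<Rightarrow> real^'y"
  shows "transpose (\<Sum>k\<in>K. c k *\<^sub>R outer (a k) (b k)) *v g = (\<Sum>k\<in>K. (c k * (a k \<bullet> g)) *\<^sub>R b k)"
  apply (simp add: vec_eq_iff matrix_vector_mult_def transpose_def sum_component outer_def inner_vec_def
      sum_distrib_left sum_distrib_right mult.assoc mult.left_commute)
  apply (rule allI, subst sum.swap, simp add: mult_ac)
  done

lemma on_coef:
  fixes a :: "nat \<Rightarrow> 'v::real_inner"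
  assumes oa: "\<forall>i\<in>{1..m}. \<forall>j\<in>{1..m}. a i \<bullet> a j = (if i = j then 1 else 0)" and j: "j \<in> {1..m}"
  shows "a j \<bullet> (\<Sum>k\<in>{1..m}. f k *\<^sub>R a k) = f j"
proof -
  have "a j \<bullet> (\<Sum>k\<in>{1..m}. f k *\<^sub>R a k) = (\<Sum>k\<in>{1..m}. f k * (a j \<bullet> a k))"
    by (simp add: inner_sum_right)
  also have "\<dots> = (\<Sum>k\<in>{1..m}. if k = j then f j else 0)"
  proof (rule sum.cong[OF refl])
    fix k assume "k \<in> {1..m}"
    thus "f k * (a j \<bullet> a k) = (if k = j then f j else 0)" using oa j by auto
  qed
  also have "\<dots> = f j" using j by simp
  finally show ?thesis .
qed

lemma sum_first:
  fixes f :: "nat \<Rightarrow> 'v::real_vector"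
  assumes "1 \<le> m" "\<forall>k\<in>{2..m}. f k = 0"
  shows "(\<Sum>k\<in>{1..m}. f k) = f 1"
proof -
  have "{1..m} = insert 1 {2..m}" using assms(1) by auto
  hence "(\<Sum>k\<in>{1..m}. f k) = f 1 + (\<Sum>k\<in>{2..m}. f k)" by simp
  also have "(\<Sum>k\<in>{2..m}. f k) = 0" using assms(2) by simp
  finally show ?thesis by simp
qed

lemma eig_char:
  fixes a :: "nat \<Rightarrow> real^'x" and b :: "nat \<Rightarrow> real^'y" and Tm :: "real^'y^'x"
  assumes m1: "1 \<le> m"
    and oa: "\<forall>i\<in>{1..m}. \<forall>j\<in>{1..m}. a i \<bullet> a j = (if i = j then 1 else 0)"
    and ob: "\<forall>i\<in>{1..m}. \<forall>j\<in>{1..m}. b i \<bullet> b j = (if i = j then 1 else 0)"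
    and rnn: "\<forall>k\<in>{1..m}. 0 \<le> \<rho> k"
    and rord: "\<forall>k\<in>{2..m}. \<rho> k \<le> \<rho> 2"
    and Tmh: "Tm *v h = (\<Sum>k\<in>{1..m}. (\<rho> k * (b k \<bullet> h)) *\<^sub>R a k)"
    and Tmg: "transpose Tm *v g = (\<Sum>k\<in>{1..m}. (\<rho> k * (a k \<bullet> g)) *\<^sub>R b k)"
    and mu: "\<mu> > \<rho> 2" "\<mu> > 0"
    and e1: "Tm *v h = \<mu> *\<^sub>R g" and e2: "transpose Tm *v g = \<mu> *\<^sub>R h"
    and nz: "g \<noteq> 0 \<or> h \<noteq> 0"
  shows "\<mu> = \<rho> 1 \<and> (\<exists>\<alpha>. \<alpha> \<noteq> 0 \<and> g = \<alpha> *\<^sub>R a 1 \<and> h = \<alpha> *\<^sub>R b 1)"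
proof -
  define \<alpha> where "\<alpha> j = a j \<bullet> g" for j
  define \<gamma> where "\<gamma> j = b j \<bullet> h" for j
  have g: "g = (1/\<mu>) *\<^sub>R (\<Sum>k\<in>{1..m}. (\<rho> k * \<gamma> k) *\<^sub>R a k)"
    using e1 Tmh mu unfolding \<gamma>_def by simp
  have h: "h = (1/\<mu>) *\<^sub>R (\<Sum>k\<in>{1..m}. (\<rho> k * \<alpha> k) *\<^sub>R b k)"
  proof -
    have "h = (1/\<mu>) *\<^sub>R (\<mu> *\<^sub>R h)" using mu by simp
    thus ?thesis using e2 Tmg unfolding \<alpha>_def by metis
  qed
  have aj: "\<alpha> j = \<rho> j * \<gamma> j / \<mu>" if "j \<in> {1..m}" for j
  proof -
    have "\<alpha> j = (1/\<mu>) * (a j \<bullet> (\<Sum>k\<in>{1..m}. (\<rho> k * \<gamma> k) *\<^sub>R a k))"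
      unfolding \<alpha>_def by (subst g) simp
    also have "\<dots> = (1/\<mu>) * (\<rho> j * \<gamma> j)" using on_coef[OF oa that] by simp
    finally show ?thesis by simp
  qed
  have gj: "\<gamma> j = \<rho> j * \<alpha> j / \<mu>" if "j \<in> {1..m}" for j
  proof -
    have "\<gamma> j = (1/\<mu>) * (b j \<bullet> (\<Sum>k\<in>{1..m}. (\<rho> k * \<alpha> k) *\<^sub>R b k))"
      unfolding \<gamma>_def by (subst h) simp
    also have "\<dots> = (1/\<mu>) * (\<rho> j * \<alpha> j)" using on_coef[OF ob that] by simp
    finally show ?thesis by simp
  qed
  have z: "\<alpha> j = 0 \<and> \<gamma> j = 0" if j: "j \<in> {2..m}" for j
  proof -
    have j1: "j \<in> {1..m}" using j by auto
    have "\<rho> j \<le> \<rho> 2" using rord j by blast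
    hence r: "0 \<le> \<rho> j" "\<rho> j < \<mu>" using rnn j1 mu by auto
    have "\<alpha> j = \<rho> j * (\<rho> j * \<alpha> j / \<mu>) / \<mu>" using aj[OF j1] gj[OF j1] by simp
    hence "\<alpha> j * (\<mu> * \<mu> - \<rho> j * \<rho> j) = 0" using mu by (simp add: field_simps)
    moreover have "\<rho> j * \<rho> j < \<mu> * \<mu>" using r by (simp add: mult_strict_mono')
    ultimately have "\<alpha> j = 0" by simp
    thus ?thesis using gj[OF j1] by simp
  qed
  have 11: "1 \<in> {1..m}" using m1 by simp
  have g1: "g = (\<rho> 1 * \<gamma> 1 / \<mu>) *\<^sub>R a 1"
    using g sum_first[OF m1, of "\<lambda>k. (\<rho> k * \<gamma> k) *\<^sub>R a k"] z by simp
  have h1: "h = (\<rho> 1 * \<alpha> 1 / \<mu>) *\<^sub>R b 1"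
    using h sum_first[OF m1, of "\<lambda>k. (\<rho> k * \<alpha> k) *\<^sub>R b k"] z by simp
  have a1nz: "\<alpha> 1 \<noteq> 0"
  proof
    assume "\<alpha> 1 = 0"
    hence "\<gamma> 1 = 0" using gj[OF 11] by simp
    thus False using nz g1 h1 \<open>\<alpha> 1 = 0\<close> by simp
  qed
  have "\<alpha> 1 = \<rho> 1 * (\<rho> 1 * \<alpha> 1 / \<mu>) / \<mu>" using aj[OF 11] gj[OF 11] by simp
  hence "\<mu> * \<mu> = \<rho> 1 * \<rho> 1" using mu a1nz by (simp add: field_simps)
  hence mr: "\<mu> = \<rho> 1" using mu rnn 11
    by (metis abs_of_nonneg abs_of_pos less_imp_le power2_eq_square real_sqrt_abs)
  have "\<gamma> 1 = \<alpha> 1" using gj[OF 11] mr mu by simp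
  hence "g = \<alpha> 1 *\<^sub>R a 1 \<and> h = \<alpha> 1 *\<^sub>R b 1" using g1 h1 mr mu by simp
  thus ?thesis using mr a1nz by blast
qed




theorem lemma5:
  fixes N :: nat and x :: "nat \<Rightarrow> real^'x" and y :: "nat \<Rightarrow> real^'y"
    and \<rho> :: "nat \<Rightarrow> real" and a :: "nat \<Rightarrow> real^'x" and b :: "nat \<Rightarrow> real^'y"
    and lam l u \<eta> :: real
    and \<beta> :: "nat \<Rightarrow> real" and p :: "nat \<Rightarrow> real^('x+'y)"
    and w :: "nat \<Rightarrow> real^('x+'y)"
    and Sxx :: "real^'x^'x" and Syy :: "real^'y^'y" and Sxy :: "real^'y^'x"
    and Tm :: "real^'y^'x" and m d :: nat and \<Delta> :: real
    and C M A B :: "real^('x+'y)^('x+'y)"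
    and uh :: "real^'x" and vh :: "real^'y" and rh :: "real^('x+'y)"
    and r :: "nat \<Rightarrow> real^('x+'y)" and \<xi> :: "nat \<Rightarrow> nat \<Rightarrow> real"
    and G :: "real^('x+'y) \<Rightarrow> real"
    and f :: "nat \<Rightarrow> real^('x+'y) \<Rightarrow> real" and fstar \<epsilon> :: "nat \<Rightarrow> real"
    and T :: int
  assumes "Sxx = emp_cov N x x" and "Syy = emp_cov N y y" and "Sxy = emp_cov N x y"
    and "Tm = minvsqrt Sxx ** Sxy ** minvsqrt Syy"
    and "m = min CARD('x) CARD('y)"
    and "d = CARD('x + 'y)"
    and "\<Delta> = \<rho> 1 - \<rho> 2"
    and "C = blk 0 Tm (transpose Tm) 0"
    and "M = matrix_inv (lam *\<^sub>R mat 1 - C)"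
    and "A = blk (lam *\<^sub>R Sxx) (- Sxy) (- transpose Sxy) (lam *\<^sub>R Syy)"
    and "B = blk Sxx 0 0 Syy"
    and "uh = minvsqrt Sxx *v a 1" and "vh = minvsqrt Syy *v b 1"
    and "rh = (1 / sqrt 2) *\<^sub>R vcat (msqrt Sxx *v uh) (msqrt Syy *v vh)"
    and "r = (\<lambda>t. msqrt B *v w t)"
    and "\<xi> = (\<lambda>t i. (r t \<bullet> p i) / norm (r t))"
    and "G = (\<lambda>v. sqrt (\<Sum>i\<in>{2..d}. ((v \<bullet> p i) / norm v)\<^sup>2 / \<beta> i)
                 / sqrt (((v \<bullet> p 1) / norm v)\<^sup>2 / \<beta> 1))"
    and "f = (\<lambda>t v. (1/2) * (v \<bullet> (A *v v)) - v \<bullet> (B *v w t))"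
    and "fstar = (\<lambda>t. f t (matrix_inv A *v (B *v w t)))"
    and "\<epsilon> = (\<lambda>t. (f t (w (Suc t)) - fstar t) / (w t \<bullet> (B *v w t)))"
    and "T = \<lceil>log (7/5) (G (r 0) / \<eta>)\<rceil>"
    and "N > 0"
    and "pd_mat Sxx" and "pd_mat Syy"
    and "\<forall>i\<in>{1..m}. \<forall>j\<in>{1..m}. a i \<bullet> a j = (if i = j then 1 else 0)"
    and "\<forall>i\<in>{1..m}. \<forall>j\<in>{1..m}. b i \<bullet> b j = (if i = j then 1 else 0)"
    and "\<forall>k\<in>{1..m}. 0 \<le> \<rho> k"
    and "\<forall>i j. 1 \<le> i \<longrightarrow> i \<le> j \<longrightarrow> j \<le> m \<longrightarrow> \<rho> j \<le> \<rho> i"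
    and "\<forall>k. m < k \<longrightarrow> \<rho> k = 0"
    and "Tm = (\<Sum>k\<in>{1..m}. \<rho> k *\<^sub>R outer (a k) (b k))"
    and "\<Delta> > 0"
    and "0 < l" and "l < u" and "u < 1"
    and "l * \<Delta> \<le> lam - \<rho> 1" and "lam - \<rho> 1 \<le> u * \<Delta>"
    and "\<forall>i\<in>{1..d}. \<forall>j\<in>{1..d}. p i \<bullet> p j = (if i = j then 1 else 0)"
    and "\<forall>i\<in>{1..d}. M *v p i = \<beta> i *\<^sub>R p i"
    and "\<forall>i j. 1 \<le> i \<longrightarrow> i \<le> j \<longrightarrow> j \<le> d \<longrightarrow> \<beta> j \<le> \<beta> i"
    and "\<beta> d > 0"
    and "p 1 = rh"
    and "0 < \<eta>" and "\<eta> < 1"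
    and "\<xi> 0 1 \<noteq> 0"
    and "\<forall>t. \<epsilon> t \<le> min (\<Sum>i\<in>{2..d}. (\<xi> t i)\<^sup>2 / \<beta> i) ((\<xi> t 1)\<^sup>2 / \<beta> 1)
                  * (\<beta> 1 - \<beta> 2)\<^sup>2 / 32"
  shows "\<forall>t::nat. T \<le> int t \<longrightarrow>
           \<bar>sin (vangle (r t) rh)\<bar> \<le> G (r t) \<and> G (r t) \<le> \<eta>"
proof -
  have cx: "CARD('x) \<ge> 1" by (simp add: Suc_le_eq)
  have cy: "CARD('y) \<ge> 1" by (simp add: Suc_le_eq)
  have m1: "1 \<le> m" using assms(5) cx cy by simp
  have dd: "d = CARD('x) + CARD('y)" using assms(6) by (simp add: card_sum)
  have d2: "2 \<le> d" using dd cx cy by linarith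
  have r1nn: "0 \<le> \<rho> 1" using assms(27) m1 by simp
  have r2nn: "0 \<le> \<rho> 2"
  proof (cases "2 \<le> m")
    case True hence "2 \<in> {1..m}" by simp
    thus ?thesis using assms(27) by blast
  next
    case False hence "m < 2" by simp
    thus ?thesis using assms(29) by simp
  qed
  have r12: "\<rho> 2 < \<rho> 1" using assms(7,31) by simp
  have rord: "\<forall>k\<in>{2..m}. \<rho> k \<le> \<rho> 2" using assms(28) by auto
  have lpos: "0 < l * \<Delta>" using assms(31,32) by simp
  have lr1: "\<rho> 1 < lam" using assms(35) lpos by simp
  have "u * \<Delta> < \<Delta>" using assms(31,34) by simp
  hence lr1u: "lam - \<rho> 1 < \<Delta>" using assms(36) by linarith
  have Tmh: "Tm *v h = (\<Sum>k\<in>{1..m}. (\<rho> k * (b k \<bullet> h)) *\<^sub>R a k)" for h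
    unfolding assms(30) by (rule outer_sum_mv)
  have Tmg: "transpose Tm *v g = (\<Sum>k\<in>{1..m}. (\<rho> k * (a k \<bullet> g)) *\<^sub>R b k)" for g
    unfolding assms(30) by (rule outer_sum_tmv)
  have Cx: "vx (C *v v) = Tm *v vy v" and Cy: "vy (C *v v) = transpose Tm *v vx v" for v
    unfolding assms(8) by simp_all
  have tdot: "g \<bullet> (Q *v h) = (transpose Q *v g) \<bullet> h" for g h and Q :: "real^'n1^'m1"
    by (metis dot_lmul_matrix transpose_matrix_vector)
  have Csym: "x \<bullet> (C *v y) = (C *v x) \<bullet> y" for x y
  proof -
    have 1: "vx x \<bullet> (Tm *v vy y) = (transpose Tm *v vx x) \<bullet> vy y" by (rule tdot)
    have 2: "vy x \<bullet> (transpose Tm *v vx y) = (Tm *v vy x) \<bullet> vx y"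
      using tdot[of "vy x" "transpose Tm" "vx y"] by simp
    show ?thesis unfolding inner_split[of x] inner_split[of "C *v x"] Cx Cy 1 2 by (simp add: add.commute)
  qed
  have Cchar: "\<mu> = \<rho> 1 \<and> (\<exists>\<alpha>. \<alpha> \<noteq> 0 \<and> v = \<alpha> *\<^sub>R vcat (a 1) (b 1))"
    if cv: "C *v v = \<mu> *\<^sub>R v" and vnz: "v \<noteq> 0" and mu: "\<mu> > \<rho> 2" for v \<mu>
  proof -
    have e1: "Tm *v vy v = \<mu> *\<^sub>R vx v" using arg_cong[OF cv, of vx] Cx by simp
    have e2: "transpose Tm *v vx v = \<mu> *\<^sub>R vy v" using arg_cong[OF cv, of vy] Cy by simp
    have nz: "vx v \<noteq> 0 \<or> vy v \<noteq> 0" using vnz vxy_eq[of v 0] by auto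
    have "\<mu> > 0" using mu r2nn by simp
    from eig_char[OF m1 assms(25,26,27) rord Tmh Tmg mu this e1 e2 nz]
    obtain \<alpha> where "\<mu> = \<rho> 1" "\<alpha> \<noteq> 0" "vx v = \<alpha> *\<^sub>R a 1" "vy v = \<alpha> *\<^sub>R b 1" by blast
    moreover have "v = \<alpha> *\<^sub>R vcat (a 1) (b 1)" using calculation by (simp add: vxy_eq[of v])
    ultimately show ?thesis by blast
  qed
  define w1 where "w1 = vcat (a 1) (b 1)"
  have a11: "a 1 \<bullet> a 1 = 1" using assms(25) m1 by simp
  have b11: "b 1 \<bullet> b 1 = 1" using assms(26) m1 by simp
  have w1w1: "w1 \<bullet> w1 = 2" unfolding w1_def using a11 b11 by (simp add: inner_split)
  have Cw1: "C *v w1 = \<rho> 1 *\<^sub>R w1"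
  proof -
    have "Tm *v b 1 = \<rho> 1 *\<^sub>R a 1"
    proof -
      have "Tm *v b 1 = (\<Sum>k\<in>{1..m}. (\<rho> k * (b k \<bullet> b 1)) *\<^sub>R a k)" by (rule Tmh)
      also have "\<dots> = (\<rho> 1 * (b 1 \<bullet> b 1)) *\<^sub>R a 1"
        by (rule sum_first[OF m1]) (use assms(26) in auto)
      finally show ?thesis using b11 by simp
    qed
    moreover have "transpose Tm *v a 1 = \<rho> 1 *\<^sub>R b 1"
    proof -
      have "transpose Tm *v a 1 = (\<Sum>k\<in>{1..m}. (\<rho> k * (a k \<bullet> a 1)) *\<^sub>R b k)" by (rule Tmg)
      also have "\<dots> = (\<rho> 1 * (a 1 \<bullet> a 1)) *\<^sub>R b 1"
        by (rule sum_first[OF m1]) (use assms(25) in auto)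
      finally show ?thesis using a11 by simp
    qed
    ultimately show ?thesis unfolding w1_def by (simp add: vxy_eq[of "C *v _"] Cx Cy)
  qed
  define K where "K = lam *\<^sub>R mat 1 - C"
  have Kv: "K *v v = lam *\<^sub>R v - C *v v" for v
    unfolding K_def by (simp add: matrix_vector_mult_diff_rdistrib scaleR_matrix_vector_assoc[symmetric])
  have Ksym: "x \<bullet> (K *v y) = (K *v x) \<bullet> y" for x y
    unfolding Kv inner_diff_right inner_diff_left Csym[of x y] by (simp add: inner_commute[of x y])
  have Kinv: "invertible K"
  proof -
    have "\<forall>v. K *v v = 0 \<longrightarrow> v = 0"
    proof (intro allI impI, rule ccontr)
      fix v assume "K *v v = 0" "v \<noteq> 0"
      hence "C *v v = lam *\<^sub>R v" by (simp add: Kv)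
      from Cchar[OF this \<open>v \<noteq> 0\<close>] lr1 r12 show False by simp
    qed
    thus ?thesis using matrix_left_invertible_ker invertible_left_inverse by blast
  qed
  have KM: "K ** M = mat 1" and MK: "M ** K = mat 1"
    using minv_props[OF Kinv] assms(9) unfolding K_def by auto
  have KMv: "K *v (M *v y) = y" for y using KM by (simp add: matrix_vector_mul_assoc)
  have bpos: "\<forall>i\<in>{1..d}. \<beta> i > 0"
  proof
    fix i assume "i \<in> {1..d}"
    hence "\<beta> d \<le> \<beta> i" using assms(39) by simp
    thus "\<beta> i > 0" using assms(40) by simp
  qed
  have Kp: "K *v p i = (1 / \<beta> i) *\<^sub>R p i" if i: "i \<in> {1..d}" for i
  proof -
    have "p i = K *v (M *v p i)" by (simp add: KMv)
    also have "\<dots> = \<beta> i *\<^sub>R (K *v p i)" using assms(38) i by (simp add: matrix_vector_mult_scaleR)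
    finally have "p i = \<beta> i *\<^sub>R (K *v p i)" .
    hence "(1 / \<beta> i) *\<^sub>R p i = (1 / \<beta> i) *\<^sub>R (\<beta> i *\<^sub>R (K *v p i))" by simp
    also have "\<dots> = K *v p i" using bpos i by (metis less_irrefl scaleR_one scaleR_scaleR nonzero_divide_eq_eq)
    finally show ?thesis by simp
  qed
  have Cp: "C *v p i = (lam - 1 / \<beta> i) *\<^sub>R p i" if i: "i \<in> {1..d}" for i
  proof -
    have "lam *\<^sub>R p i - C *v p i = (1 / \<beta> i) *\<^sub>R p i" using Kp[OF i] Kv by simp
    thus ?thesis by (simp add: algebra_simps)
  qed
  have pspan: "span (p ` {1..d}) = UNIV" using onb_span[OF assms(37)] assms(6) by simp
  have pexp: "x = (\<Sum>i\<in>{1..d}. (x \<bullet> p i) *\<^sub>R p i)" for x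
    by (rule on_expand[OF _ assms(37) pspan]) simp
  have ppar: "x \<bullet> y = (\<Sum>i\<in>{1..d}. (x \<bullet> p i) * (y \<bullet> p i))" for x y
    by (rule on_parseval[OF _ assms(37) pspan]) simp
  have bgap: "\<beta> 2 \<le> \<beta> 1 / 2"
  proof -
    obtain i0 where i0: "i0 \<in> {1..d}" "w1 \<bullet> p i0 \<noteq> 0"
    proof (rule ccontr)
      assume "\<not> thesis"
      hence "\<forall>i\<in>{1..d}. w1 \<bullet> p i = 0" using that by blast
      hence "w1 = 0" using pexp[of w1] by simp
      thus False using w1w1 by simp
    qed
    have "(C *v w1) \<bullet> p i0 = w1 \<bullet> (C *v p i0)" by (simp add: Csym)
    hence "\<rho> 1 * (w1 \<bullet> p i0) = (lam - 1 / \<beta> i0) * (w1 \<bullet> p i0)" using Cw1 Cp[OF i0(1)] by simp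
    hence bi0: "1 / \<beta> i0 = lam - \<rho> 1" using i0(2) by simp
    have "\<beta> i0 \<le> \<beta> 1" using assms(39) i0(1) by simp
    hence "1 / \<beta> 1 \<le> 1 / \<beta> i0" using bpos i0(1) by (intro divide_left_mono) auto
    hence mu1: "lam - 1 / \<beta> 1 \<ge> \<rho> 1" using bi0 by simp
    have p11: "p 1 \<bullet> p 1 = 1" using assms(37) d2 by simp
    have d1: "1 \<in> {1..d}" using d2 by simp
    have d2': "2 \<in> {1..d}" using d2 by simp
    obtain \<alpha>1 where al1: "p 1 = \<alpha>1 *\<^sub>R w1"
      using Cchar[OF Cp[OF d1]] mu1 r12 p11 unfolding w1_def by fastforce
    have "lam - 1 / \<beta> 2 \<le> \<rho> 2"
    proof (rule ccontr)
      assume "\<not> ?thesis"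
      hence "lam - 1 / \<beta> 2 > \<rho> 2" by simp
      moreover have "p 2 \<bullet> p 2 = 1" using assms(37) d2' by simp
      hence "p 2 \<noteq> 0" by auto
      ultimately obtain \<alpha>2 where "p 2 = \<alpha>2 *\<^sub>R w1" "\<alpha>2 \<noteq> 0"
        using Cchar[OF Cp[OF d2']] unfolding w1_def by blast
      moreover have "\<alpha>1 \<noteq> 0" using al1 p11 by auto
      moreover have "p 1 \<bullet> p 2 = 0" using assms(37) d1 d2' by simp
      ultimately show False using al1 w1w1 by simp
    qed
    hence "1 / \<beta> 2 \<ge> lam - \<rho> 2" by simp
    moreover have "lam - \<rho> 2 = (lam - \<rho> 1) + \<Delta>" using assms(7) by simp
    ultimately have "1 / \<beta> 2 \<ge> 2 / \<beta> 1" using bi0 \<open>1 / \<beta> 1 \<le> 1 / \<beta> i0\<close> lr1u by simp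
    thus ?thesis using bpos d1 d2' by (simp add: field_simps)
  qed
  have ble2: "\<forall>i\<in>{2..d}. \<beta> i \<le> \<beta> 2" using assms(39) by auto
  define Sx where "Sx = msqrt Sxx"
  define Sy where "Sy = msqrt Syy"
  note sx = msqrt_props[OF assms(23), folded Sx_def]
  note sy = msqrt_props[OF assms(24), folded Sy_def]
  have tSxx: "transpose Sxx = Sxx" using assms(23) unfolding pd_mat_def by simp
  have tSyy: "transpose Syy = Syy" using assms(24) unfolding pd_mat_def by simp
  have t0x: "transpose (0::real^'x^'y) = 0" and t0y: "transpose (0::real^'y^'x) = 0"
    by (simp_all add: transpose_def vec_eq_iff)
  have Bv: "vx (B *v v) = Sxx *v vx v" "vy (B *v v) = Syy *v vy v" for v
    unfolding assms(11) by simp_all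
  have Bpd: "pd_mat B"
    unfolding pd_mat_def
  proof (intro conjI allI impI)
    show "transpose B = B" unfolding assms(11) transpose_blk tSxx tSyy t0x t0y ..
    fix v :: "real^('x+'y)" assume "v \<noteq> 0"
    hence nz: "vx v \<noteq> 0 \<or> vy v \<noteq> 0" using vxy_eq[of v 0] by auto
    have q1: "vx v \<bullet> (Sxx *v vx v) \<ge> 0" and q2: "vy v \<bullet> (Syy *v vy v) \<ge> 0"
      using assms(23,24) unfolding pd_mat_def by (metis inner_zero_left less_eq_real_def matrix_vector_mult_0_right)+
    have "vx v \<noteq> 0 \<Longrightarrow> vx v \<bullet> (Sxx *v vx v) > 0" "vy v \<noteq> 0 \<Longrightarrow> vy v \<bullet> (Syy *v vy v) > 0"
      using assms(23,24) unfolding pd_mat_def by auto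
    hence "vx v \<bullet> (Sxx *v vx v) + vy v \<bullet> (Syy *v vy v) > 0" using nz q1 q2 by force
    thus "0 < v \<bullet> (B *v v)" by (simp add: inner_split Bv)
  qed
  define S0 where "S0 = blk Sx 0 0 Sy"
  have S0v: "vx (S0 *v v) = Sx *v vx v" "vy (S0 *v v) = Sy *v vy v" for v
    unfolding S0_def by simp_all
  have S0psd: "psd_mat S0"
    unfolding psd_mat_def
  proof (intro conjI allI)
    show "transpose S0 = S0" unfolding S0_def transpose_blk sx(3) sy(3) t0x t0y ..
    fix v :: "real^('x+'y)"
    have "vx v \<bullet> (Sx *v vx v) \<ge> 0" "vy v \<bullet> (Sy *v vy v) \<ge> 0"
      using sx(1) sy(1) unfolding psd_mat_def by auto
    thus "0 \<le> v \<bullet> (S0 *v v)" by (simp add: inner_split S0v)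
  qed
  have S0sq: "S0 ** S0 = B"
  proof (rule iffD2[OF matrix_eq], rule allI)
    fix v
    have xx: "Sx *v (Sx *v g) = Sxx *v g" for g using sx(2) by (simp add: matrix_vector_mul_assoc)
    have yy: "Sy *v (Sy *v g) = Syy *v g" for g using sy(2) by (simp add: matrix_vector_mul_assoc)
    have "(S0 ** S0) *v v = S0 *v (S0 *v v)" by (simp add: matrix_vector_mul_assoc)
    also have "\<dots> = B *v v" by (simp add: vxy_eq[of "S0 *v (S0 *v v)"] S0v Bv xx yy)
    finally show "(S0 ** S0) *v v = B *v v" .
  qed
  define S where "S = msqrt B"
  have SS0: "S = S0" unfolding S_def by (rule msqrt_unique[OF Bpd S0psd S0sq])
  note sB = msqrt_props[OF Bpd, folded S_def]
  have Ssym: "x \<bullet> (S *v y) = (S *v x) \<bullet> y" for x y by (rule sym_dot[OF sB(3)])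
  have Sinj: "S *v x = S *v y \<Longrightarrow> x = y" for x y using inj_matrix_vector_mult[OF sB(4)] by (simp add: inj_eq)
  have Sv: "vx (S *v v) = Sx *v vx v" "vy (S *v v) = Sy *v vy v" for v
    unfolding SS0 by (rule S0v)+
  have BSS: "B *v v = S *v (S *v v)" for v using sB(2) by (simp add: matrix_vector_mul_assoc)
  have ix: "Sx ** minvsqrt Sxx = mat 1" using minv_props[OF sx(4)] unfolding minvsqrt_def Sx_def by simp
  have iy: "minvsqrt Syy ** Sy = mat 1" using minv_props[OF sy(4)] unfolding minvsqrt_def Sy_def by simp
  have STS: "Sx ** Tm ** Sy = Sxy"
  proof -
    have "Sx ** Tm ** Sy = (Sx ** minvsqrt Sxx) ** Sxy ** (minvsqrt Syy ** Sy)"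
      unfolding assms(4) by (simp add: matrix_mul_assoc)
    thus ?thesis using ix iy by simp
  qed
  have STS': "Sy ** transpose Tm ** Sx = transpose Sxy"
  proof -
    have "transpose Sxy = transpose Sy ** transpose Tm ** transpose Sx"
      unfolding STS[symmetric] by (simp add: matrix_transpose_mul matrix_mul_assoc)
    thus ?thesis using sx(3) sy(3) by simp
  qed
  have negmv: "(- Q) *v x = - (Q *v x)" for Q :: "real^'n2^'m2" and x
    by (simp add: vec_eq_iff matrix_vector_mult_def sum_negf)
  have ASKS: "A *v v = S *v (K *v (S *v v))" for v
  proof -
    have "vx (A *v v) = vx (S *v (K *v (S *v v)))"
    proof -
      have "vx (S *v (K *v (S *v v))) = Sx *v (lam *\<^sub>R (Sx *v vx v) - Tm *v (Sy *v vy v))"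
        by (simp add: Sv Kv Cx)
      also have "\<dots> = lam *\<^sub>R ((Sx ** Sx) *v vx v) - (Sx ** Tm ** Sy) *v vy v"
        by (simp add: matrix_vector_mult_diff_distrib matrix_vector_mult_scaleR matrix_vector_mul_assoc matrix_mul_assoc)
      also have "\<dots> = vx (A *v v)"
        unfolding sx(2) STS assms(10) by (simp add: negmv scaleR_matrix_vector_assoc[symmetric])
      finally show ?thesis by simp
    qed
    moreover have "vy (A *v v) = vy (S *v (K *v (S *v v)))"
    proof -
      have "vy (S *v (K *v (S *v v))) = Sy *v (lam *\<^sub>R (Sy *v vy v) - transpose Tm *v (Sx *v vx v))"
        by (simp add: Sv Kv Cy)
      also have "\<dots> = lam *\<^sub>R ((Sy ** Sy) *v vy v) - (Sy ** transpose Tm ** Sx) *v vx v"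
        by (simp add: matrix_vector_mult_diff_distrib matrix_vector_mult_scaleR matrix_vector_mul_assoc matrix_mul_assoc)
      also have "\<dots> = vy (A *v v)"
        unfolding sy(2) STS' assms(10) by (simp add: negmv scaleR_matrix_vector_assoc[symmetric])
      finally show ?thesis by simp
    qed
    ultimately show ?thesis using vxy_eq by blast
  qed
  have Asym: "x \<bullet> (A *v y) = (A *v x) \<bullet> y" for x y
    unfolding ASKS Ssym[of x] Ksym[of "S *v x"] Ssym[of "K *v (S *v x)"] ..
  have Kinj: "K *v x = K *v y \<Longrightarrow> x = y" for x y using inj_matrix_vector_mult[OF Kinv] by (simp add: inj_eq)
  have Ainv: "invertible A"
  proof -
    have "\<forall>v. A *v v = 0 \<longrightarrow> v = 0"
    proof (intro allI impI)
      fix v assume "A *v v = 0"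
      hence "S *v (K *v (S *v v)) = S *v 0" by (simp add: ASKS)
      hence "K *v (S *v v) = K *v 0" using Sinj by simp
      hence "S *v v = S *v 0" using Kinj by simp
      thus "v = 0" using Sinj by simp
    qed
    thus ?thesis using matrix_left_invertible_ker invertible_left_inverse by blast
  qed
  have AiA: "A *v (matrix_inv A *v y) = y" for y using minv_props(1)[OF Ainv] by (simp add: matrix_vector_mul_assoc)
  have rdef: "r t = S *v w t" for t unfolding assms(15) S_def by simp
  define c where "c t i = r t \<bullet> p i" for t i
  define z where "z t = matrix_inv A *v (B *v w t)" for t
  define e where "e t = r (Suc t) - M *v r t" for t
  define ec where "ec t i = e t \<bullet> p i" for t i
  define N where "N t = (\<Sum>i\<in>{2..d}. (c t i)^2/\<beta> i)" for t
  define D where "D t = (c t 1)^2/\<beta> 1" for t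
  define Gc where "Gc t = sqrt (N t) / sqrt (D t)" for t
  have d1: "1 \<in> {1..d}" using d2 by simp
  have bposi: "\<beta> i > 0" if "i \<in> {1..d}" for i using bpos that by blast
  have b1: "\<beta> 1 > 0" using bpos d1 by blast
  have MKv: "M *v (K *v y) = y" for y using MK by (simp add: matrix_vector_mul_assoc)
  have Az: "A *v z t = B *v w t" for t unfolding z_def by (rule AiA)
  have Sz: "S *v z t = M *v r t" for t
  proof -
    have "S *v (K *v (S *v z t)) = S *v (S *v w t)" using Az[of t] by (simp add: ASKS BSS)
    hence "K *v (S *v z t) = S *v w t" using Sinj by blast
    hence "M *v (K *v (S *v z t)) = M *v (S *v w t)" by simp
    thus ?thesis using MKv rdef by simp
  qed
  have pK: "p i = \<beta> i *\<^sub>R (K *v p i)" if i: "i \<in> {1..d}" for i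
    using Kp[OF i] bposi[OF i] by simp
  have Mp: "(M *v y) \<bullet> p i = \<beta> i * (y \<bullet> p i)" if i: "i \<in> {1..d}" for i y
  proof -
    have "(M *v y) \<bullet> p i = \<beta> i * ((M *v y) \<bullet> (K *v p i))" by (subst pK[OF i]) simp
    also have "(M *v y) \<bullet> (K *v p i) = y \<bullet> p i" by (simp add: Ksym KMv)
    finally show ?thesis .
  qed
  have crec: "\<forall>i\<in>{1..d}. c (Suc t) i = \<beta> i * c t i + ec t i" for t
  proof
    fix i assume i: "i \<in> {1..d}"
    have "r (Suc t) = M *v r t + e t" unfolding e_def by simp
    hence "c (Suc t) i = (M *v r t) \<bullet> p i + ec t i" unfolding c_def ec_def by (simp add: inner_add_left)
    thus "c (Suc t) i = \<beta> i * c t i + ec t i" using Mp[OF i] unfolding c_def by simp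
  qed
  have eKe: "e t \<bullet> (K *v e t) = (\<Sum>i\<in>{1..d}. (ec t i)^2/\<beta> i)" for t
  proof -
    have "e t \<bullet> (K *v e t) = (\<Sum>i\<in>{1..d}. (e t \<bullet> p i) * ((K *v e t) \<bullet> p i))" by (rule ppar)
    also have "\<dots> = (\<Sum>i\<in>{1..d}. (ec t i)^2/\<beta> i)"
    proof (rule sum.cong[OF refl])
      fix i assume i: "i \<in> {1..d}"
      have "(K *v e t) \<bullet> p i = e t \<bullet> (K *v p i)" by (simp add: Ksym)
      also have "\<dots> = (e t \<bullet> p i) / \<beta> i" using Kp[OF i] by simp
      finally show "(e t \<bullet> p i) * ((K *v e t) \<bullet> p i) = (ec t i)^2/\<beta> i"
        unfolding ec_def by (simp add: power2_eq_square)
    qed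
    finally show ?thesis .
  qed
  have fdiff: "f t v - fstar t = 1/2 * ((v - z t) \<bullet> (A *v (v - z t)))" for t v
  proof -
    have zA: "z t \<bullet> (A *v v) = v \<bullet> (B *v w t)" using Asym[of "z t" v] Az[of t] by (simp add: inner_commute)
    have "(v - z t) \<bullet> (A *v (v - z t)) = v \<bullet> (A *v v) - 2 * (v \<bullet> (B *v w t)) + z t \<bullet> (B *v w t)"
      by (simp add: matrix_vector_mult_diff_distrib inner_diff_left inner_diff_right zA Az)
    moreover have "fstar t = 1/2 * (z t \<bullet> (B *v w t)) - z t \<bullet> (B *v w t)"
    proof -
      have "fstar t = f t (z t)" unfolding assms(19) z_def ..
      thus ?thesis unfolding assms(18) using Az[of t] by simp
    qed
    ultimately show ?thesis unfolding assms(18) by simp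
  qed
  have qS: "x \<bullet> (A *v x) = (S *v x) \<bullet> (K *v (S *v x))" for x unfolding ASKS Ssym ..
  have wBw: "w t \<bullet> (B *v w t) = r t \<bullet> r t" for t unfolding BSS Ssym rdef ..
  have eps: "\<epsilon> t = (1/2 * (\<Sum>i\<in>{1..d}. (ec t i)^2/\<beta> i)) / (r t \<bullet> r t)" for t
  proof -
    have "S *v (w (Suc t) - z t) = e t" unfolding e_def rdef[of "Suc t"] Sz[symmetric]
      by (simp add: matrix_vector_mult_diff_distrib)
    hence "f t (w (Suc t)) - fstar t = 1/2 * (e t \<bullet> (K *v e t))" using fdiff qS by simp
    hence h: "f t (w (Suc t)) - fstar t = 1/2 * (\<Sum>i\<in>{1..d}. (ec t i)^2/\<beta> i)" using eKe by simp
    show ?thesis unfolding assms(20) wBw h ..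
  qed
  have rnz: "r t \<noteq> 0" if "c t 1 \<noteq> 0" for t using that unfolding c_def by auto
  have xi: "\<xi> t i = c t i / norm (r t)" for t i unfolding assms(16) c_def ..
  have N0: "N t \<ge> 0" for t unfolding N_def using bposi by (intro sum_nonneg) (simp add: less_imp_le)
  have D0: "D t \<ge> 0" for t unfolding D_def using b1 by simp
  have errb: "(\<Sum>i\<in>{1..d}. (ec t i)^2/\<beta> i) \<le> min (N t) (D t) * (\<beta> 1 - \<beta> 2)^2/16"
    if c1: "c t 1 \<noteq> 0" for t
  proof -
    define R where "R = (norm (r t))^2"
    define X where "X = (\<Sum>i\<in>{1..d}. (ec t i)^2/\<beta> i)"
    have Rpos: "R > 0" unfolding R_def using rnz[OF c1] by simp
    have rr: "r t \<bullet> r t = R" unfolding R_def by (simp add: dot_square_norm)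
    have s1: "(\<Sum>i\<in>{2..d}. (\<xi> t i)\<^sup>2 / \<beta> i) = N t / R"
      unfolding xi N_def R_def by (simp add: power_divide sum_divide_distrib mult.commute)
    have s2: "(\<xi> t 1)\<^sup>2 / \<beta> 1 = D t / R"
      unfolding xi D_def R_def by (simp add: power_divide)
    have "\<epsilon> t = (X / 2) / R" unfolding eps rr X_def by simp
    hence "(X / 2) / R \<le> min (N t / R) (D t / R) * (\<beta> 1 - \<beta> 2)\<^sup>2 / 32"
      using assms(45) s1 s2 by metis
    also have "min (N t / R) (D t / R) = min (N t) (D t) / R"
      using Rpos by (simp add: min_divide_distrib_right)
    finally have "(X / 2) / R \<le> (min (N t) (D t) * (\<beta> 1 - \<beta> 2)\<^sup>2 / 32) / R" by simp
    hence "((X / 2) / R) * R \<le> ((min (N t) (D t) * (\<beta> 1 - \<beta> 2)\<^sup>2 / 32) / R) * R"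
      using Rpos by (intro mult_right_mono) auto
    hence "X / 2 \<le> min (N t) (D t) * (\<beta> 1 - \<beta> 2)\<^sup>2 / 32"
      using Rpos by simp
    thus ?thesis unfolding X_def by simp
  qed
  have c01: "c 0 1 \<noteq> 0" using assms(44) xi by auto
  have ind: "c t 1 \<noteq> 0 \<and> Gc t \<le> (5/7)^t * Gc 0" for t
  proof (induction t)
    case 0 thus ?case using c01 by simp
  next
    case (Suc t)
    have c1t: "c t 1 \<noteq> 0" using Suc.IH by blast
    have eb: "(\<Sum>i\<in>{1..d}. (ec t i)^2/\<beta> i) \<le> min (\<Sum>i\<in>{2..d}. (c t i)^2/\<beta> i) ((c t 1)^2/\<beta> 1) * (\<beta> 1 - \<beta> 2)^2/16"
      using errb[OF c1t] unfolding N_def D_def .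
    have st: "c (Suc t) 1 \<noteq> 0 \<and> Gc (Suc t) \<le> 5/7 * Gc t"
      using iter_step[OF d2 bpos ble2 bgap crec[of t] c1t eb]
      unfolding Gc_def N_def D_def .
    have "5/7 * Gc t \<le> 5/7 * ((5/7)^t * Gc 0)" using Suc.IH by (intro mult_left_mono) auto
    hence "Gc (Suc t) \<le> (5/7)^(Suc t) * Gc 0" using st by (simp add: mult.assoc)
    thus ?case using st by blast
  qed
  have GG: "G (r t) = Gc t" if c1: "c t 1 \<noteq> 0" for t
  proof -
    define R where "R = (norm (r t))^2"
    have Rpos: "R > 0" unfolding R_def using rnz[OF c1] by simp
    have "G (r t) = sqrt (N t / R) / sqrt (D t / R)"
      unfolding assms(17) N_def D_def R_def c_def by (simp add: power_divide sum_divide_distrib mult.commute)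
    also have "\<dots> = Gc t" unfolding Gc_def using Rpos by (simp add: real_sqrt_divide)
    finally show ?thesis .
  qed
  have Gc0: "Gc t \<ge> 0" for t unfolding Gc_def using N0 D0 by simp
  show ?thesis
  proof (intro allI impI conjI)
    fix t :: nat assume Tt: "T \<le> int t"
    have c1: "c t 1 \<noteq> 0" and Gt: "Gc t \<le> (5/7)^t * Gc 0" using ind[of t] by auto
    show "G (r t) \<le> \<eta>"
    proof (cases "Gc 0 = 0")
      case True thus ?thesis using Gt GG[OF c1] assms(42) by simp
    next
      case False
      hence g0: "Gc 0 > 0" using Gc0[of 0] by simp
      have "log (7/5) (Gc 0 / \<eta>) \<le> real t" using Tt unfolding assms(21) GG[OF c01]
        by (simp add: ceiling_le_iff)
      hence "(7/5) powr log (7/5) (Gc 0 / \<eta>) \<le> (7/5) powr real t" by simp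
      hence "Gc 0 / \<eta> \<le> (7/5)^t" using g0 assms(42) by (simp add: powr_realpow)
      hence "Gc 0 \<le> \<eta> * (7/5)^t" using assms(42) by (simp add: divide_le_eq mult.commute)
      hence "(5/7)^t * Gc 0 \<le> (5/7)^t * (\<eta> * (7/5)^t)" by (simp add: mult_left_mono)
      also have "\<dots> = \<eta> * ((5/7) * (7/5))^t" by (simp only: power_mult_distrib mult_ac)
      finally show ?thesis using Gt GG[OF c1] by simp
    qed
    have rt: "r t \<noteq> 0" using rnz[OF c1] .
    have p11: "p 1 \<bullet> p 1 = 1" using assms(37) d1 by simp
    have np1: "norm rh = 1" using p11 assms(41) by (simp add: norm_eq_sqrt_inner)
    define x where "x = c t 1 / norm (r t)"
    have np1p: "norm (p 1) = 1" using np1 assms(41) by simp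
    have va: "vangle (r t) rh = arccos x" unfolding vangle_def x_def c_def assms(41)[symmetric] np1p by simp
    have "\<bar>c t 1\<bar> \<le> norm (r t) * norm (p 1)" unfolding c_def by (rule Cauchy_Schwarz_ineq2)
    hence xb: "\<bar>x\<bar> \<le> 1" unfolding x_def using np1 assms(41) rt by (simp add: divide_le_eq)
    have x2: "x^2 \<le> 1" using xb by (simp add: abs_square_le_1)
    have sinx: "\<bar>sin (vangle (r t) rh)\<bar> = sqrt (1 - x^2)" unfolding va using xb x2
      by (simp add: sin_arccos_abs)
    define R where "R = (norm (r t))^2"
    have Rpos: "R > 0" unfolding R_def using rt by simp
    have "R = (\<Sum>i\<in>{1..d}. (c t i)^2)" unfolding R_def c_def using ppar[of "r t" "r t"]
      by (simp add: dot_square_norm power2_eq_square)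
    also have "\<dots> = (c t 1)^2 + (\<Sum>i\<in>{2..d}. (c t i)^2)"
    proof -
      have "{1..d} = insert 1 {2..d}" using d2 by auto
      thus ?thesis by simp
    qed
    finally have Rsplit: "R = (c t 1)^2 + (\<Sum>i\<in>{2..d}. (c t i)^2)" .
    have Z: "1 - x^2 = (\<Sum>i\<in>{2..d}. (c t i)^2) / R"
      unfolding x_def using Rpos Rsplit unfolding R_def by (simp add: power_divide field_simps)
    have c1R: "(c t 1)^2 \<le> R" using Rsplit by (simp add: sum_nonneg)
    have NR: "(\<Sum>i\<in>{2..d}. (c t i)^2) \<le> \<beta> 1 * N t"
    proof -
      have "(\<Sum>i\<in>{2..d}. (c t i)^2) \<le> (\<Sum>i\<in>{2..d}. \<beta> 1 * ((c t i)^2/\<beta> i))"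
      proof (rule sum_mono)
        fix i assume i: "i \<in> {2..d}"
        hence bi: "\<beta> i > 0" "\<beta> i \<le> \<beta> 1" using bposi assms(39) by auto
        hence "\<beta> 1 / \<beta> i \<ge> 1" by simp
        hence "(c t i)^2 * 1 \<le> (c t i)^2 * (\<beta> 1 / \<beta> i)" by (intro mult_left_mono) auto
        thus "(c t i)^2 \<le> \<beta> 1 * ((c t i)^2/\<beta> i)" by (simp add: mult.commute)
      qed
      thus ?thesis unfolding N_def by (simp add: sum_distrib_left)
    qed
    have "(\<Sum>i\<in>{2..d}. (c t i)^2) / R \<le> N t / D t"
    proof -
      have Dp: "D t > 0" unfolding D_def using c1 b1 by simp
      have "(\<Sum>i\<in>{2..d}. (c t i)^2) / R \<le> \<beta> 1 * N t / R" using NR Rpos by (simp add: divide_right_mono)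
      also have "\<dots> \<le> \<beta> 1 * N t / (c t 1)^2"
        using c1R c1 b1 N0[of t] Rpos by (intro divide_left_mono) auto
      also have "\<dots> = N t / D t" unfolding D_def using b1 by simp
      finally show ?thesis .
    qed
    hence "sqrt (1 - x^2) \<le> sqrt (N t / D t)" unfolding Z by (rule real_sqrt_le_mono)
    also have "\<dots> = G (r t)" unfolding GG[OF c1] Gc_def by (simp add: real_sqrt_divide)
    finally show "\<bar>sin (vangle (r t) rh)\<bar> \<le> G (r t)" unfolding sinx .
  qed
qed


end
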